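(* Assume the standing assumptions, Assumption (T), and that there is $q>2$ such that $V$ is continuously embedded in $L^q(\Omega)$. Let $t>1$ with $\frac1t+\frac2q<1$. Let $\bar u$ be a local solution of $\min_{u\in V}F(u)+\frac\alpha2\|u\|_V^2+\beta\int_\Omega|u|^pdx$ and assume $F'(\bar u)\in L^t(\Omega)$ (i.e. $F'(\bar u)v=\int_\Omega F'(\bar u)v\,dx$ for $v\in V$ with a function $F'(\bar u)\in L^t(\Omega)$). Then $\bar u\in L^\infty(\Omega)$.
   Context: Standing assumptions: $\Omega\subset\mathbb R^d$ bounded Lipschitz domain; $V$ real Hilbert space with inner product $\langle\cdot,\cdot\rangle_V$, $V\subset L^2(\Omega)$ with compact and dense embedding. $F:V\to\mathbb R$ weakly lower semicontinuous, bounded below by an affine function, continuously Fréchet differentiable. $\alpha>0$, $\beta>0$, $p\in(0,1)$. A local solution $\bar u$ is one for which there is $\rho>0$ such that the objective at $\bar u$ is not larger than at any $u$ with $\|u-\bar u\|_V\le\rho$. Assumption (T): (i) for every $u\in V$ the function $v:=\max(-1,\min(u,1))$ belongs to $V$ and satisfies $\langle u,v\rangle_V\ge\|v\|_V^2$; (ii) $C_0(\Omega)\cap V$ is dense in $V$ and in $C_0(\Omega)$ with respect to their norms. *)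

theory Defs
  imports "HOL-Analysis.Analysis"
begin

text \<open>Coordinate-free form: near every boundary point x0 there are a radius r > 0,
a unit vector e (the local vertical direction), a Lipschitz function g on the hyperplane
orthogonal to e, such that inside the ball the set is the strict subgraph of g.\<close>

definition lipschitz_domain :: "'d::euclidean_space set \<Rightarrow> bool" where
  "lipschitz_domain \<Omega> \<longleftrightarrow> open \<Omega> \<and> \<Omega> \<noteq> {} \<and>
     (\<forall>x0\<in>frontier \<Omega>. \<exists>r>0. \<exists>e::'d. \<exists>g::'d \<Rightarrow> real. \<exists>L.
        norm e = 1 \<and> L-lipschitz_on {y. y \<bullet> e = 0} g \<and>
        \<Omega> \<inter> ball x0 r = {x \<in> ball x0 r. x \<bullet> e < g (x - (x \<bullet> e) *\<^sub>R e)})"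

definition bounded_lipschitz_domain :: "'d::euclidean_space set \<Rightarrow> bool" where
  "bounded_lipschitz_domain \<Omega> \<longleftrightarrow> bounded \<Omega> \<and> lipschitz_domain \<Omega>"

definition Lp_mem :: "real \<Rightarrow> 'd::euclidean_space set \<Rightarrow> ('d \<Rightarrow> real) \<Rightarrow> bool" where
  "Lp_mem q \<Omega> f \<longleftrightarrow> f \<in> borel_measurable (lebesgue_on \<Omega>) \<and>
     integrable (lebesgue_on \<Omega>) (\<lambda>x. \<bar>f x\<bar> powr q)"

definition Lp_norm :: "real \<Rightarrow> 'd::euclidean_space set \<Rightarrow> ('d \<Rightarrow> real) \<Rightarrow> real" where
  "Lp_norm q \<Omega> f = (integral\<^sup>L (lebesgue_on \<Omega>) (\<lambda>x. \<bar>f x\<bar> powr q)) powr (1 / q)"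

definition Linf_mem :: "'d::euclidean_space set \<Rightarrow> ('d \<Rightarrow> real) \<Rightarrow> bool" where
  "Linf_mem \<Omega> f \<longleftrightarrow> f \<in> borel_measurable (lebesgue_on \<Omega>) \<and>
     (\<exists>M. AE x in lebesgue_on \<Omega>. \<bar>f x\<bar> \<le> M)"

text \<open>The Hilbert space V is an abstract real Hilbert space type 'v together with a linear map
\<iota> assigning to each element a representative function; equality in L^2 is equality a.e.\<close>

definition L2_embedding :: "'d::euclidean_space set \<Rightarrow> ('v::{real_inner,complete_space} \<Rightarrow> 'd \<Rightarrow> real) \<Rightarrow> bool" where
  "L2_embedding \<Omega> \<iota> \<longleftrightarrow>
     (\<forall>a v w. \<iota> (a *\<^sub>R v + w) = (\<lambda>x. a * \<iota> v x + \<iota> w x)) \<and>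
     (\<forall>v. Lp_mem 2 \<Omega> (\<iota> v)) \<and>
     (\<forall>v w. (AE x in lebesgue_on \<Omega>. \<iota> v x = \<iota> w x) \<longrightarrow> v = w) \<and>
     (\<exists>C. \<forall>v. Lp_norm 2 \<Omega> (\<iota> v) \<le> C * norm v)"

definition compact_dense_L2_embedding :: "'d::euclidean_space set \<Rightarrow> ('v::{real_inner,complete_space} \<Rightarrow> 'd \<Rightarrow> real) \<Rightarrow> bool" where
  "compact_dense_L2_embedding \<Omega> \<iota> \<longleftrightarrow> L2_embedding \<Omega> \<iota> \<and>
     (\<forall>s::nat \<Rightarrow> 'v. bounded (range s) \<longrightarrow>
        (\<exists>r g. strict_mono r \<and> Lp_mem 2 \<Omega> g \<and>
               (\<lambda>n. Lp_norm 2 \<Omega> (\<lambda>x. \<iota> (s (r n)) x - g x)) \<longlonglongrightarrow> 0)) \<and>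
     (\<forall>f. Lp_mem 2 \<Omega> f \<longrightarrow> (\<forall>\<epsilon>>0. \<exists>v. Lp_norm 2 \<Omega> (\<lambda>x. \<iota> v x - f x) < \<epsilon>))"

definition continuous_Lq_embedding :: "real \<Rightarrow> 'd::euclidean_space set \<Rightarrow> ('v::real_normed_vector \<Rightarrow> 'd \<Rightarrow> real) \<Rightarrow> bool" where
  "continuous_Lq_embedding q \<Omega> \<iota> \<longleftrightarrow>
     (\<forall>v. Lp_mem q \<Omega> (\<iota> v)) \<and> (\<exists>C. \<forall>v. Lp_norm q \<Omega> (\<iota> v) \<le> C * norm v)"

definition clamp1 :: "real \<Rightarrow> real" where
  "clamp1 s = max (-1) (min s 1)"

definition C0_fun :: "'d::euclidean_space set \<Rightarrow> ('d \<Rightarrow> real) \<Rightarrow> bool" where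
  "C0_fun \<Omega> f \<longleftrightarrow> continuous_on (closure \<Omega>) f \<and> (\<forall>x\<in>frontier \<Omega>. f x = 0)"

definition in_C0_cap_V :: "'d::euclidean_space set \<Rightarrow> ('v \<Rightarrow> 'd \<Rightarrow> real) \<Rightarrow> 'v \<Rightarrow> bool" where
  "in_C0_cap_V \<Omega> \<iota> v \<longleftrightarrow> (\<exists>f. C0_fun \<Omega> f \<and> (AE x in lebesgue_on \<Omega>. \<iota> v x = f x))"

definition assumption_T :: "'d::euclidean_space set \<Rightarrow> ('v::{real_inner,complete_space} \<Rightarrow> 'd \<Rightarrow> real) \<Rightarrow> bool" where
  "assumption_T \<Omega> \<iota> \<longleftrightarrow>
     (\<forall>u. \<exists>v. (AE x in lebesgue_on \<Omega>. \<iota> v x = clamp1 (\<iota> u x)) \<and> inner u v \<ge> (norm v)\<^sup>2) \<and>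
     (\<forall>v. \<forall>\<epsilon>>0. \<exists>w. in_C0_cap_V \<Omega> \<iota> w \<and> norm (w - v) < \<epsilon>) \<and>
     (\<forall>f. C0_fun \<Omega> f \<longrightarrow> (\<forall>\<epsilon>>0. \<exists>w g. C0_fun \<Omega> g \<and> (AE x in lebesgue_on \<Omega>. \<iota> w x = g x) \<and>
          (\<forall>x\<in>closure \<Omega>. \<bar>g x - f x\<bar> < \<epsilon>)))"

definition weakly_converges :: "(nat \<Rightarrow> 'v::real_inner) \<Rightarrow> 'v \<Rightarrow> bool" where
  "weakly_converges s v \<longleftrightarrow> (\<forall>w. (\<lambda>n. inner (s n) w) \<longlonglongrightarrow> inner v w)"

definition weakly_lsc :: "('v::real_inner \<Rightarrow> real) \<Rightarrow> bool" where
  "weakly_lsc F \<longleftrightarrow> (\<forall>s v. weakly_converges s v \<longrightarrow>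
     ereal (F v) \<le> liminf (\<lambda>n. ereal (F (s n))))"

definition bounded_below_affine :: "('v::real_inner \<Rightarrow> real) \<Rightarrow> bool" where
  "bounded_below_affine F \<longleftrightarrow> (\<exists>g c. \<forall>v. F v \<ge> inner g v + c)"

definition continuously_frechet :: "('v::real_normed_vector \<Rightarrow> real) \<Rightarrow> ('v \<Rightarrow> 'v \<Rightarrow>\<^sub>L real) \<Rightarrow> bool" where
  "continuously_frechet F DF \<longleftrightarrow> (\<forall>v. (F has_derivative blinfun_apply (DF v)) (at v)) \<and>
     continuous_on UNIV DF"

definition objective :: "('v::real_normed_vector \<Rightarrow> real) \<Rightarrow> real \<Rightarrow> real \<Rightarrow> real \<Rightarrow>
     'd::euclidean_space set \<Rightarrow> ('v \<Rightarrow> 'd \<Rightarrow> real) \<Rightarrow> 'v \<Rightarrow> real" where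
  "objective F \<alpha> \<beta> p \<Omega> \<iota> u =
     F u + \<alpha> / 2 * (norm u)\<^sup>2 + \<beta> * integral\<^sup>L (lebesgue_on \<Omega>) (\<lambda>x. \<bar>\<iota> u x\<bar> powr p)"

definition local_solution :: "('v::real_normed_vector \<Rightarrow> real) \<Rightarrow> 'v \<Rightarrow> bool" where
  "local_solution J ub \<longleftrightarrow> (\<exists>\<rho>>0. \<forall>u. norm (u - ub) \<le> \<rho> \<longrightarrow> J ub \<le> J u)"

end

theory Submission
  imports Defs
begin


lemma young3:
  fixes a b c t q r :: real
  assumes a: "a \<ge> 0" and b: "b \<ge> 0" and c: "c \<ge> 0"
    and t: "t > 1" and q: "q > 1" and r: "r > 0" and sum: "1/t + 1/q + r = 1"
  shows "a * b * c \<le> a powr t / t + b powr q / q + r * c powr (1/r)"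
proof -
  define m where "m = 1 / (1/q + r)"
  have s0: "1/q + r > 0" using q r by (smt (verit) divide_pos_pos)
  have s1: "1/q + r < 1" using sum t by (smt (verit) divide_pos_pos)
  have m1: "m > 1" unfolding m_def using s0 s1 by (simp add: field_simps)
  have tm: "1/t + 1/m = 1" unfolding m_def using sum by simp
  have Y1: "a * (b*c) \<le> a powr t / t + (b*c) powr m / m"
    by (rule Youngs_inequality) (use t m1 tm a b c in auto)
  have qm: "q/m > 1" unfolding m_def using q r by (simp add: field_simps)
  have rm: "1/(r*m) > 1" unfolding m_def using q r s1 by (simp add: field_simps)
  have qq: "q + q*(q*r) > 0" using q r by (simp add: add_pos_pos)
  have qm2: "1/(q/m) + 1/(1/(r*m)) = 1" unfolding m_def using q r s0 qq by (simp add: field_simps)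
  have Y2: "(b powr m) * (c powr m) \<le> (b powr m) powr (q/m) / (q/m) + (c powr m) powr (1/(r*m)) / (1/(r*m))"
    by (rule Youngs_inequality) (use qm rm qm2 in auto)
  have e1: "(b powr m) powr (q/m) = b powr q" using m1 by (simp add: powr_powr)
  have e2: "(c powr m) powr (1/(r*m)) = c powr (1/r)" using m1 r by (simp add: powr_powr)
  have "(b*c) powr m = b powr m * c powr m" using b c by (simp add: powr_mult)
  also have "\<dots> \<le> m * (b powr q / q + r * c powr (1/r))"
    using Y2 e1 e2 m1 by (simp add: field_simps)
  finally have "(b*c) powr m / m \<le> b powr q / q + r * c powr (1/r)"
    using m1 by (simp add: field_simps)
  with Y1 show ?thesis by (simp add: mult.assoc)
qed

definition psi :: "real \<Rightarrow> real \<Rightarrow> real" where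
  "psi k y = y - k * clamp1 (y / k)"

lemma psi_abs: "k > 0 \<Longrightarrow> \<bar>psi k y\<bar> = max (\<bar>y\<bar> - k) 0"
  unfolding psi_def clamp1_def by (auto simp: field_simps max_def min_def)

lemma psi_small: "k > 0 \<Longrightarrow> \<bar>y\<bar> \<le> k \<Longrightarrow> psi k y = 0"
  unfolding psi_def clamp1_def by (auto simp: field_simps max_def min_def)

lemma psi_shrink: assumes "k > 0" "0 \<le> s" "s \<le> 1" shows "\<bar>y - s * psi k y\<bar> \<le> \<bar>y\<bar>"
proof -
  consider "\<bar>y\<bar> \<le> k" | "y > k" | "y < -k" by linarith
  then show ?thesis
  proof cases
    case 1 then show ?thesis using psi_small[OF assms(1)] by simp
  next
    case 2 then have "psi k y = y - k" using assms unfolding psi_def clamp1_def by (auto simp: field_simps)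
    moreover have "s * (y - k) \<le> y - k" using 2 assms by (simp add: mult_left_le_one_le)
    moreover have "0 \<le> s * (y - k)" using 2 assms by simp
    ultimately show ?thesis using 2 assms by (smt (verit))
  next
    case 3 then have "psi k y = y + k" using assms unfolding psi_def clamp1_def by (auto simp: field_simps)
    moreover have "s * (-(y + k)) \<le> -(y + k)" using 3 assms by (simp add: mult_left_le_one_le)
    then have "y + k \<le> s * (y + k)" by (simp add: algebra_simps)
    moreover have "s * (y + k) \<le> 0" using 3 assms by (simp add: mult_nonneg_nonpos)
    ultimately show ?thesis using 3 assms by (smt (verit))
  qed
qed



lemma stampacchia:
  fixes \<phi> :: "real \<Rightarrow> real" and K q \<theta> :: real
  assumes nn: "\<And>k. \<phi> k \<ge> 0" and anti: "\<And>k h. 0 < k \<Longrightarrow> k \<le> h \<Longrightarrow> \<phi> h \<le> \<phi> k"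
    and rec: "\<And>k h. 0 < k \<Longrightarrow> k < h \<Longrightarrow> (h - k) powr q * \<phi> h \<le> K * \<phi> k powr \<theta>"
    and q: "q > 0" and th: "\<theta> > 1"
  shows "\<exists>k>0. \<phi> k = 0"
proof (cases "\<phi> 1 = 0")
  case True then show ?thesis by (intro exI[of _ 1]) auto
next
  case False
  define P0 where "P0 = \<phi> 1"
  have P0: "P0 > 0" using False nn[of 1] unfolding P0_def by simp
  define Kp where "Kp = max K 0"
  define \<gamma> where "\<gamma> = 2 powr (q/(\<theta>-1))"
  have \<gamma>1: "\<gamma> > 1" unfolding \<gamma>_def using q th by simp
  define D where "D = Kp * 2 powr q * P0 powr (\<theta>-1) * \<gamma>"
  have D0: "D \<ge> 0" unfolding D_def Kp_def using \<gamma>1 by simp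
  define d where "d = (D + 1) powr (1/q)"
  have d0: "d > 0" unfolding d_def using D0 by simp
  have dq: "d powr q = D + 1" unfolding d_def using D0 q by (simp add: powr_powr)
  define kk where "kk n = 1 + d * (1 - (1/2::real)^n)" for n
  have kk_ge: "kk n \<ge> 1" for n unfolding kk_def using d0 by (simp add: power_le_one)
  have kk_le: "kk n \<le> 1 + d" for n unfolding kk_def using d0 by simp
  have claim: "\<phi> (kk n) \<le> P0 * (inverse \<gamma>) ^ n" for n
  proof (induction n)
    case 0 then show ?case unfolding kk_def P0_def by simp
  next
    case (Suc n)
    define A where "A = 2 powr (q * real n)"
    define G where "G = \<gamma> powr (- real n)"
    have A0: "A > 0" unfolding A_def by simp
    have G0: "G > 0" unfolding G_def using \<gamma>1 by simp
    have invG: "(inverse \<gamma>) ^ n = G" unfolding G_def using \<gamma>1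
      by (simp add: powr_minus powr_realpow power_inverse)
    have invG1: "(inverse \<gamma>) ^ Suc n = G / \<gamma>" using invG by (simp add: field_simps)
    define \<delta> where "\<delta> = d * (1/2::real) ^ Suc n"
    have \<delta>: "kk (Suc n) - kk n = \<delta>" unfolding kk_def \<delta>_def by (simp add: field_simps)
    have \<delta>0: "\<delta> > 0" unfolding \<delta>_def using d0 by simp
    have \<delta>q: "\<delta> powr q = d powr q / (A * 2 powr q)"
    proof -
      have "\<delta> powr q = d powr q * ((1/2::real) ^ Suc n) powr q" unfolding \<delta>_def using d0 by (intro powr_mult; simp)
      also have "((1/2::real) ^ Suc n) powr q = 2 powr (- (real (Suc n) * q))"
      proof -
        have e: "(2::real) powr real (Suc n) = 2 ^ Suc n" by (rule powr_realpow) simp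
        have "(1/2::real) ^ Suc n = inverse (2 powr real (Suc n))"
          by (simp only: e power_one_over inverse_eq_divide)
        then have "(1/2::real) ^ Suc n = 2 powr (- real (Suc n))" by (simp only: powr_minus)
        then show ?thesis by (simp add: powr_powr algebra_simps del: power_Suc)
      qed
      also have "\<dots> = 1 / (A * 2 powr q)"
      proof -
        have m: "(2::real) powr (- (real (Suc n) * q)) = inverse (2 powr (real (Suc n) * q))" by (rule powr_minus)
        have "(2::real) powr (real (Suc n) * q) = A * 2 powr q" unfolding A_def by (simp add: powr_add[symmetric] algebra_simps)
        with m show ?thesis by (simp add: divide_inverse)
      qed
      finally show ?thesis by simp
    qed
    have \<gamma>A: "\<gamma> powr (real n * (\<theta> - 1)) = A" unfolding \<gamma>_def A_def using th by (simp add: powr_powr)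
    have Gth: "G powr \<theta> = G / A"
    proof -
      have "G powr \<theta> = \<gamma> powr (- real n * \<theta>)" unfolding G_def using \<gamma>1 by (simp add: powr_powr)
      also have "- real n * \<theta> = - real n + - (real n * (\<theta> - 1))" by (simp add: algebra_simps)
      also have "\<gamma> powr \<dots> = G / A"
      proof -
        have a: "\<gamma> powr (- real n + - (real n * (\<theta> - 1))) = \<gamma> powr (- real n) * \<gamma> powr (- (real n * (\<theta> - 1)))" by (rule powr_add)
        have b: "\<gamma> powr (- (real n * (\<theta> - 1))) = inverse A" using \<gamma>A by (simp only: powr_minus)
        show ?thesis unfolding G_def a b by (simp add: divide_inverse)
      qed
      finally show ?thesis .
    qed
    have Pth: "P0 powr \<theta> = P0 powr (\<theta> - 1) * P0"
    proof -
      have "P0 powr (\<theta> - 1) * P0 powr 1 = P0 powr (\<theta> - 1 + 1)" by (rule powr_add[symmetric])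
      then show ?thesis using P0 by simp
    qed
    have "\<phi> (kk n) powr \<theta> \<le> (P0 * G) powr \<theta>"
      using Suc.IH invG nn th by (intro powr_mono2) auto
    also have "\<dots> = P0 powr (\<theta> - 1) * P0 * (G / A)" using P0 G0 Gth Pth by (simp add: powr_mult)
    finally have ph: "\<phi> (kk n) powr \<theta> \<le> P0 powr (\<theta> - 1) * P0 * (G / A)" .
    have "\<delta> powr q * \<phi> (kk (Suc n)) \<le> K * \<phi> (kk n) powr \<theta>"
      using rec[of "kk n" "kk (Suc n)"] \<delta> \<delta>0 kk_ge[of n] by simp
    also have "\<dots> \<le> Kp * \<phi> (kk n) powr \<theta>" unfolding Kp_def by (intro mult_right_mono) auto
    also have "\<dots> \<le> Kp * (P0 powr (\<theta> - 1) * P0 * (G / A))" unfolding Kp_def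
      by (intro mult_left_mono ph) auto
    also have "\<dots> = D * (P0 * (G / \<gamma>)) / (A * 2 powr q)" unfolding D_def using \<gamma>1 A0
      by (simp add: field_simps)
    also have "\<dots> \<le> d powr q * (P0 * (G / \<gamma>)) / (A * 2 powr q)" unfolding dq
      using P0 G0 \<gamma>1 A0 by (intro divide_right_mono mult_right_mono) auto
    also have "\<dots> = \<delta> powr q * (P0 * (G / \<gamma>))" unfolding \<delta>q by simp
    finally have "\<delta> powr q * \<phi> (kk (Suc n)) \<le> \<delta> powr q * (P0 * (G / \<gamma>))" .
    then have "\<phi> (kk (Suc n)) \<le> P0 * (G / \<gamma>)"
      by (rule mult_left_le_imp_le) (use \<delta>0 in simp)
    then show ?case using invG1 by simp
  qed
  have "\<phi> (1 + d) \<le> P0 * (inverse \<gamma>) ^ n" for n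
    using anti[of "kk n" "1 + d"] kk_ge[of n] kk_le[of n] claim[of n] by simp
  moreover have "(\<lambda>n. P0 * (inverse \<gamma>) ^ n) \<longlonglongrightarrow> P0 * 0"
    using \<gamma>1 by (intro tendsto_mult tendsto_const LIMSEQ_power_zero) (auto simp: inverse_less_1_iff)
  ultimately have "\<phi> (1 + d) \<le> 0"
    by (intro LIMSEQ_le_const[of "\<lambda>n. P0 * (inverse \<gamma>) ^ n"]) auto
  then show ?thesis using nn[of "1 + d"] d0 by (intro exI[of _ "1 + d"]) auto
qed



lemma holder3:
  fixes M :: "'a measure" and g f :: "'a \<Rightarrow> real" and A :: "'a set" and t q r :: real
  assumes g[measurable]: "g \<in> borel_measurable M" and f[measurable]: "f \<in> borel_measurable M"
    and A[measurable]: "A \<in> sets M" and Afin: "emeasure M A < \<infinity>"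
    and ig: "integrable M (\<lambda>x. \<bar>g x\<bar> powr t)" and iF: "integrable M (\<lambda>x. \<bar>f x\<bar> powr q)"
    and f0: "\<And>x. x \<in> space M \<Longrightarrow> x \<notin> A \<Longrightarrow> f x = 0"
    and t: "t > 1" and q: "q > 1" and r: "r > 0" and sum: "1/t + 1/q + r = 1"
  shows "(\<integral>x. \<bar>g x\<bar> * \<bar>f x\<bar> \<partial>M) \<le>
    (\<integral>x. \<bar>g x\<bar> powr t \<partial>M) powr (1/t) * (\<integral>x. \<bar>f x\<bar> powr q \<partial>M) powr (1/q) * measure M A powr r"
proof -
  define G where "G = (\<integral>x. \<bar>g x\<bar> powr t \<partial>M)"
  define W where "W = (\<integral>x. \<bar>f x\<bar> powr q \<partial>M)"
  define m where "m = measure M A"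
  have G0: "G \<ge> 0" unfolding G_def by simp
  have W0: "W \<ge> 0" unfolding W_def by simp
  have m0: "m \<ge> 0" unfolding m_def by simp
  define Z where "Z = G powr (1/t) * W powr (1/q) * m powr r"
  have Z0: "Z \<ge> 0" unfolding Z_def by simp
  show ?thesis
  proof (cases "G = 0 \<or> W = 0 \<or> m = 0")
    case True
    have "AE x in M. \<bar>g x\<bar> * \<bar>f x\<bar> = 0"
    proof -
      { assume "G = 0"
        then have "AE x in M. \<bar>g x\<bar> powr t = 0"
          using integral_nonneg_eq_0_iff_AE[OF ig] unfolding G_def by simp
        then have ?thesis by eventually_elim simp }
      moreover
      { assume "W = 0"
        then have "AE x in M. \<bar>f x\<bar> powr q = 0"
          using integral_nonneg_eq_0_iff_AE[OF iF] unfolding W_def by simp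
        then have ?thesis by eventually_elim simp }
      moreover
      { assume "m = 0"
        then have "emeasure M A = 0" unfolding m_def using Afin
          by (simp add: emeasure_eq_ennreal_measure)
        then have "A \<in> null_sets M" using A by auto
        then have "AE x in M. x \<notin> A" by (rule AE_not_in)
        then have ?thesis using AE_space by eventually_elim (simp add: f0) }
      ultimately show ?thesis using True by blast
    qed
    then have "(\<integral>x. \<bar>g x\<bar> * \<bar>f x\<bar> \<partial>M) = (\<integral>x. 0 \<partial>M)"
      by (intro integral_cong_AE) auto
    then show ?thesis using Z0 unfolding Z_def G_def W_def m_def by simp
  next
    case False
    then have Gp: "G > 0" and Wp: "W > 0" and mp: "m > 0" using G0 W0 m0 by auto
    define R where "R x = Z * (\<bar>g x\<bar> powr t / (G * t) + \<bar>f x\<bar> powr q / (W * q) + r * indicator A x / m)" for x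
    have R0: "R x \<ge> 0" for x unfolding R_def using Z0 Gp Wp mp t q r
      by (intro mult_nonneg_nonneg add_nonneg_nonneg divide_nonneg_nonneg) auto
    have pt: "\<bar>g x\<bar> * \<bar>f x\<bar> \<le> R x" if x: "x \<in> space M" for x
    proof (cases "x \<in> A")
      case False then show ?thesis using f0[OF x] R0[of x] by simp
    next
      case True
      define a where "a = \<bar>g x\<bar> / G powr (1/t)"
      define b where "b = \<bar>f x\<bar> / W powr (1/q)"
      define c where "c = 1 / m powr r"
      have Y: "a * b * c \<le> a powr t / t + b powr q / q + r * c powr (1/r)"
        by (rule young3) (use t q r sum Gp Wp mp in \<open>auto simp: a_def b_def c_def\<close>)
      have at: "a powr t = \<bar>g x\<bar> powr t / G" unfolding a_def using Gp t
        by (simp add: powr_divide powr_powr)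
      have bq: "b powr q = \<bar>f x\<bar> powr q / W" unfolding b_def using Wp q
        by (simp add: powr_divide powr_powr)
      have cr: "c powr (1/r) = 1 / m" unfolding c_def using mp r
        by (simp add: powr_divide powr_powr)
      have Zabc: "Z * (a * b * c) = \<bar>g x\<bar> * \<bar>f x\<bar>" unfolding Z_def a_def b_def c_def
        using Gp Wp mp by (simp add: field_simps)
      have "\<bar>g x\<bar> * \<bar>f x\<bar> = Z * (a * b * c)" using Zabc by simp
      also have "\<dots> \<le> Z * (a powr t / t + b powr q / q + r * c powr (1/r))"
        using Y Z0 by (rule mult_left_mono)
      also have "\<dots> = R x" unfolding R_def at bq cr using True by (simp add: field_simps)
      finally show ?thesis .
    qed
    have iR: "integrable M R" unfolding R_def
      using ig iF A Afin by (intro integrable_mult_right integrable_add integrable_divide integrable_real_indicator) auto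
    have "(\<integral>x. \<bar>g x\<bar> * \<bar>f x\<bar> \<partial>M) \<le> (\<integral>x. R x \<partial>M)"
      using iR pt R0 by (intro integral_mono') auto
    also have "(\<integral>x. R x \<partial>M) = Z * (G / (G * t) + W / (W * q) + r * m / m)"
    proof -
      have i3: "integrable M (\<lambda>x. r * indicator A x / m)"
        using A Afin by (intro integrable_divide integrable_mult_right integrable_real_indicator) auto
      have "(\<integral>x. R x \<partial>M) = Z * ((\<integral>x. \<bar>g x\<bar> powr t / (G * t) \<partial>M) + (\<integral>x. \<bar>f x\<bar> powr q / (W * q) \<partial>M)
          + (\<integral>x. r * indicator A x / m \<partial>M))"
        unfolding R_def using ig iF i3 by (simp add: integral_add)
      also have "(\<integral>x. r * indicator A x / m \<partial>M) = r * m / m"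
        using A unfolding m_def by (simp add: sets.Int_space_eq2)
      finally show ?thesis unfolding G_def W_def by simp
    qed
    also have "\<dots> = Z"
    proof -
      have "G / (G * t) + W / (W * q) + r * m / m = 1/t + 1/q + r" using Gp Wp mp by simp
      then show ?thesis using sum by simp
    qed
    finally show ?thesis unfolding Z_def G_def W_def m_def .
  qed
qed



lemma powr_small_bound: "0 < p \<Longrightarrow> p < 1 \<Longrightarrow> \<bar>y::real\<bar> powr p \<le> 1 + \<bar>y\<bar> powr 2"
proof (cases "\<bar>y\<bar> \<le> 1")
  case True
  assume "0 < p" "p < 1"
  then have "\<bar>y\<bar> powr p \<le> 1" using True by (intro powr_le1) auto
  then show ?thesis by (smt (verit) powr_ge_zero)
next
  case False
  assume "0 < p" "p < 1"
  then have "\<bar>y\<bar> powr p \<le> \<bar>y\<bar> powr 2" using False by (intro powr_mono) auto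
  then show ?thesis by simp
qed

theorem theorem5p9:
  fixes \<Omega> :: "'d::euclidean_space set"
    and \<iota> :: "'v::{real_inner,complete_space} \<Rightarrow> 'd \<Rightarrow> real"
    and F :: "'v \<Rightarrow> real" and DF :: "'v \<Rightarrow> 'v \<Rightarrow>\<^sub>L real"
    and \<alpha> \<beta> p q t :: real and ub :: 'v and g :: "'d \<Rightarrow> real"
  assumes dom: "bounded_lipschitz_domain \<Omega>"
    and emb: "compact_dense_L2_embedding \<Omega> \<iota>"
    and F_wlsc: "weakly_lsc F"
    and F_below: "bounded_below_affine F"
    and F_C1: "continuously_frechet F DF"
    and \<alpha>: "\<alpha> > 0" and \<beta>: "\<beta> > 0" and p: "0 < p" "p < 1"
    and T: "assumption_T \<Omega> \<iota>"
    and q: "q > 2" and Lq: "continuous_Lq_embedding q \<Omega> \<iota>"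
    and t: "t > 1" "1 / t + 2 / q < 1"
    and loc: "local_solution (objective F \<alpha> \<beta> p \<Omega> \<iota>) ub"
    and g: "Lp_mem t \<Omega> g"
    and Fg: "\<forall>v. blinfun_apply (DF ub) v = integral\<^sup>L (lebesgue_on \<Omega>) (\<lambda>x. g x * \<iota> v x)"
  shows "Linf_mem \<Omega> (\<iota> ub)"
proof -
  define M where "M = lebesgue_on \<Omega>"
  have bnd: "bounded \<Omega>" and opn: "open \<Omega>"
    using dom unfolding bounded_lipschitz_domain_def lipschitz_domain_def by auto
  have Oml: "\<Omega> \<in> lmeasurable" using bnd opn by (rule lmeasurable_open)
  have Osets: "\<Omega> \<in> sets lebesgue" using Oml by (rule fmeasurableD)
  have fin: "finite_measure M" unfolding M_def using Oml by (rule finite_measure_lebesgue_on)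
  have spM: "space M = \<Omega>" unfolding M_def by simp
  have L2: "L2_embedding \<Omega> \<iota>" using emb unfolding compact_dense_L2_embedding_def by auto
  have lin: "\<iota> (a *\<^sub>R v + w) = (\<lambda>x. a * \<iota> v x + \<iota> w x)" for a v w
    using L2 unfolding L2_embedding_def by blast
  have L2mem: "Lp_mem 2 \<Omega> (\<iota> v)" for v using L2 unfolding L2_embedding_def by blast
  have meas[measurable]: "\<iota> v \<in> borel_measurable M" for v using L2mem[of v] unfolding Lp_mem_def M_def by auto
  have i0: "\<iota> 0 x = 0" for x
  proof -
    have "\<iota> (1 *\<^sub>R 0 + 0) x = 1 * \<iota> 0 x + \<iota> 0 x" using fun_cong[OF lin[of 1 0 0], of x] by (simp only:)
    then show ?thesis by simp
  qed
  have iscale: "\<iota> (a *\<^sub>R v) x = a * \<iota> v x" for a v x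
    using fun_cong[OF lin[of a v 0], of x] i0 by simp
  have idiff: "\<iota> (u - v) x = \<iota> u x - \<iota> v x" for u v x
  proof -
    have "u - v = (-1) *\<^sub>R v + u" by simp
    then show ?thesis using fun_cong[OF lin[of "-1" v u], of x] by simp
  qed
  have Pint: "integrable M (\<lambda>x. \<bar>\<iota> u x\<bar> powr p)" for u
  proof -
    have c1: "integrable M (\<lambda>x. 1::real)" using fin by (rule finite_measure.integrable_const)
    have c2: "integrable M (\<lambda>x. \<bar>\<iota> u x\<bar> powr 2)" using L2mem[of u] unfolding Lp_mem_def M_def by auto
    have i1: "integrable M (\<lambda>x. 1 + \<bar>\<iota> u x\<bar> powr 2)" using c1 c2 by (rule Bochner_Integration.integrable_add)
    have m1: "(\<lambda>x. \<bar>\<iota> u x\<bar> powr p) \<in> borel_measurable M" by measurable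
    have a1: "AE x in M. norm (\<bar>\<iota> u x\<bar> powr p) \<le> norm (1 + \<bar>\<iota> u x\<bar> powr 2)"
      using powr_small_bound[OF p] by (intro AE_I2) (simp add: add_nonneg_nonneg)
    show ?thesis by (rule Bochner_Integration.integrable_bound[OF i1 m1 a1])
  qed
  obtain \<rho> where \<rho>: "\<rho> > 0" and locmin:
    "\<And>u. norm (u - ub) \<le> \<rho> \<Longrightarrow> objective F \<alpha> \<beta> p \<Omega> \<iota> ub \<le> objective F \<alpha> \<beta> p \<Omega> \<iota> u"
    using loc unfolding local_solution_def by blast
  have Fder: "(F has_derivative blinfun_apply (DF ub)) (at ub)"
    using F_C1 unfolding continuously_frechet_def by blast
  have varineq: "\<alpha> * inner ub w \<le> - DF ub w"
    if AEw: "AE x in M. \<forall>s\<in>{0..1}. \<bar>\<iota> ub x - s * \<iota> w x\<bar> \<le> \<bar>\<iota> ub x\<bar>" for w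
  proof -
    define \<delta> where "\<delta> = min 1 (\<rho> / (norm w + 1))"
    have \<delta>0: "\<delta> > 0"
    proof -
      have "norm w + 1 > 0" by (simp add: add_nonneg_pos)
      then show ?thesis unfolding \<delta>_def using \<rho> by simp
    qed
    have ineq: "\<alpha> * inner ub w - \<alpha> / 2 * s * (norm w)\<^sup>2 \<le> (F (ub - s *\<^sub>R w) - F ub) / s"
      if s: "s \<in> {0<..<\<delta>}" for s
    proof -
      have s0: "s > 0" and s1: "s \<le> 1" and sd: "s \<le> \<rho> / (norm w + 1)" using s unfolding \<delta>_def by auto
      have "norm ((ub - s *\<^sub>R w) - ub) = s * norm w" using s0 by simp
      also have "\<dots> \<le> \<rho> / (norm w + 1) * norm w" using sd by (intro mult_right_mono) auto
      also have "\<dots> \<le> \<rho>" using \<rho> by (simp add: field_simps add_pos_nonneg)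
      finally have J: "objective F \<alpha> \<beta> p \<Omega> \<iota> ub \<le> objective F \<alpha> \<beta> p \<Omega> \<iota> (ub - s *\<^sub>R w)"
        by (rule locmin)
      have P: "integral\<^sup>L M (\<lambda>x. \<bar>\<iota> (ub - s *\<^sub>R w) x\<bar> powr p) \<le> integral\<^sup>L M (\<lambda>x. \<bar>\<iota> ub x\<bar> powr p)"
      proof (rule integral_mono_AE[OF Pint Pint])
        show "AE x in M. \<bar>\<iota> (ub - s *\<^sub>R w) x\<bar> powr p \<le> \<bar>\<iota> ub x\<bar> powr p"
          using AEw
        proof eventually_elim
          case (elim x)
          then have "\<bar>\<iota> ub x - s * \<iota> w x\<bar> \<le> \<bar>\<iota> ub x\<bar>" using s0 s1 by auto
          then show ?case using p by (simp add: idiff iscale powr_mono2)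
        qed
      qed
      have N: "(norm (ub - s *\<^sub>R w))\<^sup>2 = (norm ub)\<^sup>2 - 2 * s * inner ub w + s\<^sup>2 * (norm w)\<^sup>2"
        unfolding power2_norm_eq_inner
        by (simp add: inner_diff_left inner_diff_right inner_commute algebra_simps power2_eq_square)
      have "F ub + \<alpha> / 2 * (norm ub)\<^sup>2 + \<beta> * integral\<^sup>L M (\<lambda>x. \<bar>\<iota> ub x\<bar> powr p)
          \<le> F (ub - s *\<^sub>R w) + \<alpha> / 2 * (norm (ub - s *\<^sub>R w))\<^sup>2 + \<beta> * integral\<^sup>L M (\<lambda>x. \<bar>\<iota> (ub - s *\<^sub>R w) x\<bar> powr p)"
        using J unfolding objective_def M_def .
      moreover have "\<beta> * integral\<^sup>L M (\<lambda>x. \<bar>\<iota> (ub - s *\<^sub>R w) x\<bar> powr p) \<le> \<beta> * integral\<^sup>L M (\<lambda>x. \<bar>\<iota> ub x\<bar> powr p)"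
        using P \<beta> by simp
      ultimately have "F ub \<le> F (ub - s *\<^sub>R w) - \<alpha> * s * inner ub w + \<alpha> / 2 * s\<^sup>2 * (norm w)\<^sup>2"
        unfolding N by (simp add: algebra_simps)
      then have "s * (\<alpha> * inner ub w - \<alpha> / 2 * s * (norm w)\<^sup>2) \<le> F (ub - s *\<^sub>R w) - F ub"
        by (simp add: algebra_simps power2_eq_square)
      then show ?thesis using s0 by (simp add: field_simps)
    qed
    have D1: "((\<lambda>s::real. ub + s *\<^sub>R (- w)) has_derivative (\<lambda>s. s *\<^sub>R (- w))) (at 0)"
      by (auto intro!: derivative_eq_intros)
    have D2: "((\<lambda>s. F (ub + s *\<^sub>R (- w))) has_derivative (\<lambda>s. DF ub (s *\<^sub>R (- w)))) (at 0)"
      using has_derivative_compose[OF D1, of F "DF ub"] Fder by simp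
    have D3: "((\<lambda>s. F (ub + s *\<^sub>R (- w))) has_field_derivative (DF ub (- w))) (at 0)"
      using D2 by (rule has_derivative_imp_has_field_derivative) (simp add: blinfun.scaleR_right blinfun.minus_right)
    then have "((\<lambda>s. (F (ub + s *\<^sub>R (- w)) - F (ub + 0 *\<^sub>R (- w))) / (s - 0)) \<longlongrightarrow> DF ub (- w)) (at 0)"
      by (simp only: has_field_derivative_iff)
    then have L0: "((\<lambda>s. (F (ub - s *\<^sub>R w) - F ub) / s) \<longlongrightarrow> - DF ub w) (at 0)"
      by (simp add: blinfun.minus_right)
    have L1: "((\<lambda>s. (F (ub - s *\<^sub>R w) - F ub) / s) \<longlongrightarrow> - DF ub w) (at_right 0)"
      by (rule tendsto_mono[OF at_le[of "{0<..}" "UNIV::real set" "0::real"] L0]) simp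
    have L2: "((\<lambda>s. \<alpha> * inner ub w - \<alpha> / 2 * s * (norm w)\<^sup>2) \<longlongrightarrow> \<alpha> * inner ub w - \<alpha> / 2 * 0 * (norm w)\<^sup>2) (at_right 0)"
      by (intro tendsto_intros)
    show ?thesis
      using L2 L1 eventually_mono[OF eventually_at_right_real[OF \<delta>0] ineq]
      by (intro tendsto_le[of "at_right (0::real)"]) auto
  qed
  have trunc: "\<exists>w. (AE x in M. \<iota> w x = psi k (\<iota> ub x)) \<and> (norm w)\<^sup>2 \<le> inner ub w" if k: "k > 0" for k
  proof -
    obtain v where v1: "AE x in lebesgue_on \<Omega>. \<iota> v x = clamp1 (\<iota> ((1/k) *\<^sub>R ub) x)"
      and v2: "inner ((1/k) *\<^sub>R ub) v \<ge> (norm v)\<^sup>2"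
      using T unfolding assumption_T_def by blast
    define c where "c = k *\<^sub>R v"
    define w where "w = ub - c"
    have "AE x in M. \<iota> w x = psi k (\<iota> ub x)"
      using v1 unfolding M_def
    proof eventually_elim
      case (elim x)
      then show ?case unfolding w_def c_def psi_def
        by (simp add: idiff iscale divide_inverse mult.commute)
    qed
    moreover have "(norm w)\<^sup>2 \<le> inner ub w"
    proof -
      have e1: "inner ub w - (norm w)\<^sup>2 = inner ub c - (norm c)\<^sup>2" unfolding w_def
        by (simp add: power2_norm_eq_inner inner_diff_left inner_diff_right inner_commute)
      have e2: "inner ub c - (norm c)\<^sup>2 = k\<^sup>2 * (inner ((1/k) *\<^sub>R ub) v - (norm v)\<^sup>2)"
        unfolding c_def using k by (simp add: power2_eq_square field_simps inner_commute)
      have "0 \<le> k\<^sup>2 * (inner ((1/k) *\<^sub>R ub) v - (norm v)\<^sup>2)" using v2 by simp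
      then show ?thesis using e1 e2 by simp
    qed
    ultimately show ?thesis by blast
  qed
  obtain C where C: "\<And>v. Lp_norm q \<Omega> (\<iota> v) \<le> C * norm v" and Lqmem: "\<And>v. Lp_mem q \<Omega> (\<iota> v)"
    using Lq unfolding continuous_Lq_embedding_def by blast
  define Cp where "Cp = max C 1"
  have Cp: "Lp_norm q \<Omega> (\<iota> v) \<le> Cp * norm v" for v
    using C[of v] unfolding Cp_def by (smt (verit) mult_right_mono norm_ge_zero)
  have Cp1: "Cp \<ge> 1" unfolding Cp_def by simp
  have gm[measurable]: "g \<in> borel_measurable M" and ig: "integrable M (\<lambda>x. \<bar>g x\<bar> powr t)"
    using g unfolding Lp_mem_def M_def by auto
  define Gt where "Gt = (\<integral>x. \<bar>g x\<bar> powr t \<partial>M) powr (1/t)"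
  have Gt0: "Gt \<ge> 0" unfolding Gt_def by simp
  define r where "r = 1 - 1/t - 1/q"
  have q1: "q > 1" using q by simp
  have r0: "r > 0"
  proof -
    have "1/q > 0" using q by simp
    moreover have "2/q = 2 * (1/q)" by simp
    ultimately show ?thesis unfolding r_def using t by linarith
  qed
  have rsum: "1/t + 1/q + r = 1" unfolding r_def by simp
  define K where "K = Cp\<^sup>2 * Gt / \<alpha>"
  have K0: "K \<ge> 0" unfolding K_def using Gt0 \<alpha> by simp
  define fk where "fk k = (\<lambda>x. psi k (\<iota> ub x))" for k
  have fkm[measurable]: "fk k \<in> borel_measurable M" for k
    unfolding fk_def psi_def clamp1_def by measurable
  define Ak where "Ak k = {x \<in> \<Omega>. k < \<bar>\<iota> ub x\<bar>}" for k
  have Akm[measurable]: "Ak k \<in> sets M" for k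
  proof -
    have "Ak k = {x \<in> space M. k < \<bar>\<iota> ub x\<bar>}" unfolding Ak_def spM ..
    also have "\<dots> \<in> sets M" by measurable
    finally show ?thesis .
  qed
  have Akfin: "emeasure M (Ak k) < \<infinity>" for k
    using finite_measure.emeasure_finite[OF fin] by (simp add: less_top)
  define \<phi> where "\<phi> k = measure M (Ak k)" for k
  have est: "(\<integral>x. \<bar>fk k x\<bar> powr q \<partial>M) powr (1/q) \<le> K * \<phi> k powr r"
    and ifk: "integrable M (\<lambda>x. \<bar>fk k x\<bar> powr q)" if k: "k > 0" for k
  proof -
    obtain w where w1: "AE x in M. \<iota> w x = psi k (\<iota> ub x)" and w2: "(norm w)\<^sup>2 \<le> inner ub w"
      using trunc[OF k] by blast
    have AEw: "AE x in M. \<forall>s\<in>{0..1}. \<bar>\<iota> ub x - s * \<iota> w x\<bar> \<le> \<bar>\<iota> ub x\<bar>"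
      using w1 by eventually_elim (auto intro: psi_shrink[OF k])
    have w1': "AE x in M. \<iota> w x = fk k x" using w1 unfolding fk_def .
    have mq1: "(\<lambda>x. \<bar>\<iota> w x\<bar> powr q) \<in> borel_measurable M" by measurable
    have mq2: "(\<lambda>x. \<bar>fk k x\<bar> powr q) \<in> borel_measurable M" by measurable
    have aeq: "AE x in M. \<bar>\<iota> w x\<bar> powr q = \<bar>fk k x\<bar> powr q" using w1' by eventually_elim simp
    have Iq: "(\<integral>x. \<bar>\<iota> w x\<bar> powr q \<partial>M) = (\<integral>x. \<bar>fk k x\<bar> powr q \<partial>M)"
      by (rule integral_cong_AE[OF mq1 mq2 aeq])
    show ifk: "integrable M (\<lambda>x. \<bar>fk k x\<bar> powr q)"
    proof -
      have "integrable M (\<lambda>x. \<bar>\<iota> w x\<bar> powr q)" using Lqmem[of w] unfolding Lp_mem_def M_def by auto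
      then show ?thesis by (rule integrable_cong_AE_imp[OF _ mq2 aeq])
    qed
    define Wq where "Wq = (\<integral>x. \<bar>fk k x\<bar> powr q \<partial>M) powr (1/q)"
    have Wq0: "Wq \<ge> 0" unfolding Wq_def by simp
    have WqC: "Wq \<le> Cp * norm w" using Cp[of w] Iq unfolding Lp_norm_def Wq_def M_def by simp
    have IG: "(\<integral>x. g x * \<iota> w x \<partial>M) = (\<integral>x. g x * fk k x \<partial>M)"
    proof (rule integral_cong_AE)
      show "(\<lambda>x. g x * \<iota> w x) \<in> borel_measurable M" by measurable
      show "(\<lambda>x. g x * fk k x) \<in> borel_measurable M" by measurable
      show "AE x in M. g x * \<iota> w x = g x * fk k x" using w1' by eventually_elim simp
    qed
    have "\<alpha> * (norm w)\<^sup>2 \<le> \<alpha> * inner ub w" using w2 \<alpha> by simp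
    also have "\<dots> \<le> - DF ub w" by (rule varineq[OF AEw])
    also have "\<dots> = - (\<integral>x. g x * fk k x \<partial>M)" using Fg IG unfolding M_def by simp
    also have "\<dots> \<le> (\<integral>x. \<bar>g x\<bar> * \<bar>fk k x\<bar> \<partial>M)"
      using integral_abs_bound[of M "\<lambda>x. g x * fk k x"] by (simp add: abs_mult)
    also have "\<dots> \<le> Gt * Wq * \<phi> k powr r" unfolding Gt_def Wq_def \<phi>_def
    proof (rule holder3[OF gm fkm Akm Akfin ig ifk _ t(1) q1 r0 rsum])
      fix x assume "x \<in> space M" "x \<notin> Ak k"
      then show "fk k x = 0" unfolding fk_def Ak_def spM using psi_small[OF k] by auto
    qed
    finally have main: "\<alpha> * (norm w)\<^sup>2 \<le> Gt * Wq * \<phi> k powr r" .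
    have ph0: "\<phi> k powr r \<ge> 0" by simp
    have WqK: "Wq \<le> K * \<phi> k powr r"
    proof (cases "Wq = 0")
      case True then show ?thesis using K0 ph0 by simp
    next
      case False
      then have Wqp: "Wq > 0" using Wq0 by simp
      have "\<alpha> * Wq\<^sup>2 \<le> \<alpha> * (Cp * norm w)\<^sup>2" using WqC Wq0 \<alpha> by (intro mult_left_mono power_mono) auto
      also have "\<dots> = Cp\<^sup>2 * (\<alpha> * (norm w)\<^sup>2)" by (simp add: power_mult_distrib)
      also have "\<dots> \<le> Cp\<^sup>2 * (Gt * Wq * \<phi> k powr r)" using main by (intro mult_left_mono) auto
      finally have "Wq * (\<alpha> * Wq) \<le> Wq * (Cp\<^sup>2 * Gt * \<phi> k powr r)" by (simp add: power2_eq_square algebra_simps)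
      then have "\<alpha> * Wq \<le> Cp\<^sup>2 * Gt * \<phi> k powr r" using Wqp by (rule mult_left_le_imp_le)
      then show ?thesis unfolding K_def using \<alpha> by (simp add: field_simps)
    qed
    then show "(\<integral>x. \<bar>fk k x\<bar> powr q \<partial>M) powr (1/q) \<le> K * \<phi> k powr r"
      unfolding Wq_def .
  qed
  have rec: "(h - k) powr q * \<phi> h \<le> K powr q * \<phi> k powr (r * q)" if hk: "0 < k" "k < h" for k h
  proof -
    have "(h - k) powr q * \<phi> h = (\<integral>x. (h - k) powr q * indicator (Ak h) x \<partial>M)"
      unfolding \<phi>_def using Akm[of h] by (simp add: sets.Int_space_eq2)
    also have "\<dots> \<le> (\<integral>x. \<bar>fk k x\<bar> powr q \<partial>M)"
    proof (rule integral_mono)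
      show "integrable M (\<lambda>x. (h - k) powr q * indicator (Ak h) x)"
        using Akm[of h] Akfin[of h] by (intro integrable_mult_right integrable_real_indicator) auto
      show "integrable M (\<lambda>x. \<bar>fk k x\<bar> powr q)" by (rule ifk[OF hk(1)])
      fix x assume x: "x \<in> space M"
      show "(h - k) powr q * indicator (Ak h) x \<le> \<bar>fk k x\<bar> powr q"
      proof (cases "x \<in> Ak h")
        case True
        then have "h < \<bar>\<iota> ub x\<bar>" unfolding Ak_def by auto
        then have "h - k \<le> \<bar>fk k x\<bar>" unfolding fk_def using psi_abs[OF hk(1)] by simp
        then show ?thesis using True hk q by (simp add: powr_mono2)
      qed simp
    qed
    also have "\<dots> = ((\<integral>x. \<bar>fk k x\<bar> powr q \<partial>M) powr (1/q)) powr q"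
      using q by (simp add: powr_powr)
    also have "\<dots> \<le> (K * \<phi> k powr r) powr q"
      using est[OF hk(1)] q by (intro powr_mono2) auto
    also have "\<dots> = K powr q * \<phi> k powr (r * q)"
      using K0 by (simp add: powr_mult powr_powr)
    finally show ?thesis .
  qed
  have th: "r * q > 1"
  proof -
    have "r * q = q - q / t - 1" unfolding r_def using q by (simp add: field_simps)
    moreover have "q / t + 2 < q"
    proof -
      have "q * (1/t + 2/q) < q * 1" using t(2) q by (intro mult_strict_left_mono) auto
      moreover have "q * (1/t + 2/q) = q / t + 2" using q by (simp add: distrib_left)
      ultimately show ?thesis by simp
    qed
    ultimately show ?thesis by simp
  qed
  obtain k0 where k0: "k0 > 0" "\<phi> k0 = 0"
  proof -
    have nn: "\<And>k. \<phi> k \<ge> 0" unfolding \<phi>_def by simp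
    have an: "\<And>k h. 0 < k \<Longrightarrow> k \<le> h \<Longrightarrow> \<phi> h \<le> \<phi> k"
      unfolding \<phi>_def using Akm
      by (intro finite_measure.finite_measure_mono[OF fin]) (auto simp: Ak_def)
    have q0: "q > 0" using q by simp
    have "\<exists>k>0. \<phi> k = 0" by (rule stampacchia[OF nn an rec q0 th])
    then show ?thesis using that by blast
  qed
  have "emeasure M (Ak k0) = 0"
    using k0 Akfin[of k0] unfolding \<phi>_def by (simp add: emeasure_eq_ennreal_measure)
  then have "Ak k0 \<in> null_sets M" using Akm by auto
  then have "AE x in M. x \<notin> Ak k0" by (rule AE_not_in)
  then have "AE x in M. \<bar>\<iota> ub x\<bar> \<le> k0" using AE_space
    by eventually_elim (auto simp: Ak_def spM)
  then show ?thesis unfolding Linf_mem_def using meas[of ub] unfolding M_def by blast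
qed

end
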